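(* Assume the setting and standing assumptions (A1), (A2) described in the context. If $\Psi^-$ is initially positive and $\Psi^+$ has a negative sign change, then the system exhibits microphase separation for every $\Delta\in\mathcal{D}$ (robust microphase separation).
   Context: Let $n,m\ge 1$, $B\in\mathbb{Z}^{n\times m}$, $C\in\mathbb{Z}^{m\times n}$. Given bounds $0\le \Delta_j^-\le \Delta_j^+<\infty$ ($j=1,\dots,m$), let $\mathcal{D}$ be the set of diagonal matrices $\Delta=\mathrm{diag}(\Delta_1,\dots,\Delta_m)$ with $\Delta_j^-\le\Delta_j\le\Delta_j^+$ for all $j$. Let $J_2,J_4\in\mathbb{R}^{n\times n}$ be symmetric. Standing assumptions: (A1) for every $\Delta\in\mathcal{D}$, the matrix $B\Delta C$ is singular and has $n-1$ eigenvalues (counted with multiplicity) with negative real part (so $0$ is a simple eigenvalue), and there is a nonzero vector $v\ge 0$ with $v^\top B=0$; (A2) $J_2$ is indefinite, $J_4$ is negative semidefinite, and there exists $\bar\kappa$ such that $\bar\kappa^2 J_2+\bar\kappa^4 J_4$ is negative definite. For real $\kappa\ge 0$ and $\Delta\in\mathcal{D}$ set $J(\Delta,\kappa)=B\Delta C+\kappa^2 J_2+\kappa^4 J_4$ and let $\rho(\Delta,\kappa)$ be its spectral abscissa (the maximum real part of its eigenvalues). Define $\Psi^-(\kappa)=\min_{\Delta\in\mathcal{D}}\det[-J(\Delta,\kappa)]$ and $\Psi^+(\kappa)=\max_{\Delta\in\mathcal{D}}\det[-J(\Delta,\kappa)]$. A continuous function $f$ on $[0,\infty)$ is initially positive if there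 is $\hat\kappa>0$ with $f>0$ on $(0,\hat\kappa)$; it has a negative sign change if $f(\kappa_1)>0>f(\kappa_2)$ for some $\kappa_1<\kappa_2$. For a given $\Delta\in\mathcal{D}$, the system exhibits microphase separation (MS) if there exists $\hat\kappa>0$ with $\rho(\Delta,\kappa)<0$ for all $\kappa\in(0,\hat\kappa)$, and there exist $\hat\kappa<\kappa_1<\kappa_2$ with $\rho(\Delta,\kappa_1)>0$ and $\rho(\Delta,\kappa_2)<0$. *)

theory Defs
  imports "Jordan_Normal_Form.Char_Poly" "HOL-Computational_Algebra.Polynomial"
begin

definition cmat :: "real mat \<Rightarrow> complex mat" where
  "cmat A = map_mat complex_of_real A"

definition spectral_abscissa :: "real mat \<Rightarrow> real" where
  "spectral_abscissa A = Max (Re ` {z. eigenvalue (cmat A) z})"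

definition n_neg_eigs :: "real mat \<Rightarrow> nat" where
  "n_neg_eigs A = (\<Sum>z \<in> {z. eigenvalue (cmat A) z \<and> Re z < 0}. order z (char_poly (cmat A)))"

definition Dset :: "nat \<Rightarrow> (nat \<Rightarrow> real) \<Rightarrow> (nat \<Rightarrow> real) \<Rightarrow> real mat set" where
  "Dset m lo hi = {D \<in> carrier_mat m m. diagonal_mat D \<and> (\<forall>j<m. lo j \<le> D $$ (j,j) \<and> D $$ (j,j) \<le> hi j)}"

definition Jmat :: "real mat \<Rightarrow> real mat \<Rightarrow> real mat \<Rightarrow> real mat \<Rightarrow> real mat \<Rightarrow> real \<Rightarrow> real mat" where
  "Jmat B C J2 J4 D \<kappa> = B * D * C + (\<kappa>^2) \<cdot>\<^sub>m J2 + (\<kappa>^4) \<cdot>\<^sub>m J4"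

definition Psi_minus :: "nat \<Rightarrow> (nat \<Rightarrow> real) \<Rightarrow> (nat \<Rightarrow> real) \<Rightarrow> real mat \<Rightarrow> real mat \<Rightarrow> real mat \<Rightarrow> real mat \<Rightarrow> real \<Rightarrow> real" where
  "Psi_minus m lo hi B C J2 J4 \<kappa> = Inf ((\<lambda>D. det (- Jmat B C J2 J4 D \<kappa>)) ` Dset m lo hi)"

definition Psi_plus :: "nat \<Rightarrow> (nat \<Rightarrow> real) \<Rightarrow> (nat \<Rightarrow> real) \<Rightarrow> real mat \<Rightarrow> real mat \<Rightarrow> real mat \<Rightarrow> real mat \<Rightarrow> real \<Rightarrow> real" where
  "Psi_plus m lo hi B C J2 J4 \<kappa> = Sup ((\<lambda>D. det (- Jmat B C J2 J4 D \<kappa>)) ` Dset m lo hi)"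

definition initially_positive :: "(real \<Rightarrow> real) \<Rightarrow> bool" where
  "initially_positive f \<longleftrightarrow> (\<exists>k>0. \<forall>\<kappa>\<in>{0<..<k}. f \<kappa> > 0)"

definition negative_sign_change :: "(real \<Rightarrow> real) \<Rightarrow> bool" where
  "negative_sign_change f \<longleftrightarrow> (\<exists>k1 k2. 0 \<le> k1 \<and> k1 < k2 \<and> f k1 > 0 \<and> f k2 < 0)"

definition microphase_separation :: "(real \<Rightarrow> real) \<Rightarrow> bool" where
  "microphase_separation \<rho> \<longleftrightarrow>
     (\<exists>k>0. (\<forall>\<kappa>\<in>{0<..<k}. \<rho> \<kappa> < 0) \<and>
        (\<exists>k1 k2. k < k1 \<and> k1 < k2 \<and> \<rho> k1 > 0 \<and> \<rho> k2 < 0))"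

definition qform :: "real mat \<Rightarrow> real vec \<Rightarrow> real" where
  "qform A x = x \<bullet> (A *\<^sub>v x)"

definition indefinite_mat :: "nat \<Rightarrow> real mat \<Rightarrow> bool" where
  "indefinite_mat n A \<longleftrightarrow> (\<exists>x\<in>carrier_vec n. qform A x > 0) \<and> (\<exists>y\<in>carrier_vec n. qform A y < 0)"

definition neg_semidef :: "nat \<Rightarrow> real mat \<Rightarrow> bool" where
  "neg_semidef n A \<longleftrightarrow> (\<forall>x\<in>carrier_vec n. qform A x \<le> 0)"

definition neg_def :: "nat \<Rightarrow> real mat \<Rightarrow> bool" where
  "neg_def n A \<longleftrightarrow> (\<forall>x\<in>carrier_vec n. x \<noteq> 0\<^sub>v n \<longrightarrow> qform A x < 0)"

end

theory Submission
  imports Defs "HOL-Analysis.Elementary_Metric_Spaces" "HOL-Analysis.Function_Topology"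
begin

lemma cmat_carrier[simp]: "A \<in> carrier_mat n n \<Longrightarrow> cmat A \<in> carrier_mat n n"
  unfolding cmat_def by simp

lemma char_poly_cmat: "A \<in> carrier_mat n n \<Longrightarrow> char_poly (cmat A) = map_poly complex_of_real (char_poly A)"
  unfolding cmat_def by (rule of_real_hom.char_poly_hom)

lemma eig_iff: "A \<in> carrier_mat n n \<Longrightarrow> eigenvalue (cmat A) z \<longleftrightarrow> poly (map_poly complex_of_real (char_poly A)) z = 0"
proof -
  assume A: "A \<in> carrier_mat n n"
  show ?thesis using eigenvalue_root_char_poly[OF cmat_carrier[OF A], of z] char_poly_cmat[OF A] by simp
qed

lemma poly_of_real_sum:
  assumes "degree p \<le> N"
  shows "poly (map_poly complex_of_real p) z = (\<Sum>i\<le>N. complex_of_real (coeff p i) * z^i)"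
proof -
  have d: "degree (map_poly complex_of_real p) \<le> N" using assms degree_map_poly_le order_trans by blast
  have "poly (map_poly complex_of_real p) z = (\<Sum>i\<le>degree (map_poly complex_of_real p). coeff (map_poly complex_of_real p) i * z^i)"
    by (rule poly_altdef)
  also have "\<dots> = (\<Sum>i\<le>N. coeff (map_poly complex_of_real p) i * z^i)"
    by (rule sum.mono_neutral_left) (use d in \<open>auto simp: coeff_eq_0\<close>)
  also have "\<dots> = (\<Sum>i\<le>N. complex_of_real (coeff p i) * z^i)"
    by (simp add: coeff_map_poly)
  finally show ?thesis .
qed

lemma poly_char_poly_0: "A \<in> carrier_mat n n \<Longrightarrow> poly (char_poly A) 0 = det (- (A :: real mat))"
proof -
  assume A: "A \<in> carrier_mat n n"
  have "char_matrix A 0 = A" unfolding char_matrix_def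
    by (rule eq_matI) (use A in auto)
  then show ?thesis using char_poly_matrix[OF A, of 0] by simp
qed

lemma char_poly_nz: "A \<in> carrier_mat n n \<Longrightarrow> map_poly complex_of_real (char_poly A) \<noteq> 0"
proof
  assume A: "A \<in> carrier_mat n n" and z: "map_poly complex_of_real (char_poly A) = 0"
  have "coeff (char_poly A) n = 1" using degree_monic_char_poly[OF A] by simp
  then have "coeff (map_poly complex_of_real (char_poly A)) n = 1" by (simp add: coeff_map_poly)
  with z show False by simp
qed

lemma eig_finite: "A \<in> carrier_mat n n \<Longrightarrow> finite {z. eigenvalue (cmat A) z}"
proof -
  assume A: "A \<in> carrier_mat n n"
  have "{z. eigenvalue (cmat A) z} = {z. poly (map_poly complex_of_real (char_poly A)) z = 0}"
    using eig_iff[OF A] by blast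
  then show ?thesis using poly_roots_finite[OF char_poly_nz[OF A]] by simp
qed

lemma eig_nonempty: assumes A: "A \<in> carrier_mat n n" and n: "n \<ge> 1"
  shows "\<exists>z. eigenvalue (cmat A) z"
proof -
  obtain as where f: "char_poly (cmat A) = (\<Prod>a\<leftarrow>as. [:- a, 1:])" and l: "length as = n"
    using char_poly_factorized[OF cmat_carrier[OF A]] by blast
  from l n obtain a where a: "a \<in> set as" by (cases as) auto
  have "poly (char_poly (cmat A)) a = 0" unfolding f poly_prod_list
    using a by (induct as) auto
  then show ?thesis using eigenvalue_root_char_poly[OF cmat_carrier[OF A]] by blast
qed

lemma SA_neg: assumes A: "A \<in> carrier_mat n n" and n: "n \<ge> 1"
  and neg: "\<And>z. eigenvalue (cmat A) z \<Longrightarrow> Re z < 0"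
  shows "spectral_abscissa A < 0"
  unfolding spectral_abscissa_def
  using eig_finite[OF A] eig_nonempty[OF A n] neg by (subst Max_less_iff) auto

lemma SA_pos: assumes A: "A \<in> carrier_mat n n"
  and z: "eigenvalue (cmat A) z" and r: "Re z > 0"
  shows "spectral_abscissa A > 0"
proof -
  have "Re z \<le> spectral_abscissa A" unfolding spectral_abscissa_def
    using eig_finite[OF A] z by (intro Max_ge) auto
  with r show ?thesis by simp
qed

lemma coeff_prod_cont:
  fixes f :: "'b \<Rightarrow> real \<Rightarrow> real poly"
  assumes "finite I" "\<And>i k. i \<in> I \<Longrightarrow> isCont (\<lambda>t. coeff (f i t) k) t0"
  shows "isCont (\<lambda>t. coeff (\<Prod>i\<in>I. f i t) k) t0"
  using assms
proof (induct I arbitrary: k rule: finite_induct)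
  case empty
  then show ?case by simp
next
  case (insert x F)
  have "isCont (\<lambda>t. \<Sum>j\<le>k. coeff (f x t) j * coeff (\<Prod>i\<in>F. f i t) (k - j)) t0"
    using insert by (intro continuous_intros) auto
  then show ?case using insert by (simp add: coeff_mult)
qed

lemma coeff_const_cont: "isCont (\<lambda>t. coeff [: g t :] k) t0" if "isCont g t0" for g :: "real \<Rightarrow> real"
proof (cases k)
  case 0 then show ?thesis using that by simp
next
  case (Suc k') then show ?thesis by simp
qed

lemma cp_coeff_cont:
  fixes A :: "real \<Rightarrow> real mat"
  assumes A: "\<And>t. A t \<in> carrier_mat n n"
    and c: "\<And>i j. i < n \<Longrightarrow> j < n \<Longrightarrow> isCont (\<lambda>t. A t $$ (i,j)) t0"
  shows "isCont (\<lambda>t. coeff (char_poly (A t)) k) t0"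
proof -
  have e: "char_poly (A t) = (\<Sum>p\<in>{p. p permutes {0..<n}}. signof p * (\<Prod>i = 0..<n. char_poly_matrix (A t) $$ (i, p i)))" for t
    unfolding char_poly_def by (rule det_def') (use A in auto)
  have ent: "char_poly_matrix (A t) $$ (i, j) = (if i = j then [:0,1:] else 0) + [: - (A t $$ (i,j)) :]"
    if "i < n" "j < n" for i j t
    using A[of t] that unfolding char_poly_matrix_def by auto
  have ec: "isCont (\<lambda>t. coeff (char_poly_matrix (A t) $$ (i, j)) k) t0" if "i < n" "j < n" for i j k
  proof -
    have "isCont (\<lambda>t. coeff [: - (A t $$ (i,j)) :] k) t0"
      by (rule coeff_const_cont[where g="\<lambda>t. - (A t $$ (i,j))"]) (intro continuous_intros c that)
    then have "isCont (\<lambda>t. coeff (if i = j then [:0,1:] else 0) k + coeff [: - (A t $$ (i,j)) :] k) t0"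
      by (intro continuous_intros)
    then show ?thesis using ent[OF that] by simp
  qed
  have pc: "isCont (\<lambda>t. coeff (signof p * (\<Prod>i = 0..<n. char_poly_matrix (A t) $$ (i, p i))) k) t0"
    if p: "p permutes {0..<n}" for p
  proof -
    have pi: "i < n \<Longrightarrow> p i < n" for i using permutes_in_image[OF p, of i] by simp
    have "isCont (\<lambda>t. coeff (\<Prod>i = 0..<n. char_poly_matrix (A t) $$ (i, p i)) k) t0"
      by (rule coeff_prod_cont) (auto intro: ec pi)
    then show ?thesis
      by (cases p rule: sign_cases) (auto intro: continuous_intros)
  qed
  show ?thesis unfolding e coeff_sum
    by (intro continuous_intros pc) (auto simp: finite_permutations)
qed

lemma poly_diff_identity:
  fixes a :: "nat \<Rightarrow> complex"
  shows "(\<Sum>i\<le>N. a i * z^i) - (\<Sum>i\<le>N. a i * w^i) = (z - w) * (\<Sum>i\<le>N. a i * (\<Sum>k<i. w^(i - Suc k) * z^k))"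
proof -
  have "(\<Sum>i\<le>N. a i * z^i) - (\<Sum>i\<le>N. a i * w^i) = (\<Sum>i\<le>N. a i * (z^i - w^i))"
    by (simp add: sum_subtractf[symmetric] right_diff_distrib)
  also have "\<dots> = (\<Sum>i\<le>N. (z - w) * (a i * (\<Sum>k<i. w^(i - Suc k) * z^k)))"
    by (rule sum.cong) (auto simp: power_diff_sumr2 mult_ac)
  also have "\<dots> = (z - w) * (\<Sum>i\<le>N. a i * (\<Sum>k<i. w^(i - Suc k) * z^k))"
    by (simp add: sum_distrib_left)
  finally show ?thesis .
qed

lemma inner_zero: "(\<Sum>k<i. (0::complex)^(i - Suc k) * 0^k) = (if i = 1 then 1 else 0)"
proof (cases i)
  case 0 then show ?thesis by simp
next
  case (Suc m)
  have "(\<Sum>k<Suc m. (0::complex)^(m - k) * 0^k) = (\<Sum>k<Suc m. if k = 0 then (if m = 0 then 1 else 0) else 0)"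
    by (rule sum.cong) auto
  also have "\<dots> = (if m = 0 then 1 else 0)" by (subst sum.delta) auto
  finally show ?thesis using Suc by simp
qed

lemma outer_zero:
  assumes "N \<ge> 1"
  shows "(\<Sum>i\<le>N. a i * (\<Sum>k<i. (0::complex)^(i - Suc k) * 0^k)) = a 1"
proof -
  have "(\<Sum>i\<le>N. a i * (\<Sum>k<i. (0::complex)^(i - Suc k) * 0^k)) = (\<Sum>i\<le>N. if i = 1 then a i else 0)"
    by (rule sum.cong) (auto simp: inner_zero)
  also have "\<dots> = a 1" using assms by (subst sum.delta) auto
  finally show ?thesis .
qed

lemma sum_at_zero: "(\<Sum>i\<le>N. a i * (0::complex)^i) = a 0"
proof -
  have "(\<Sum>i\<le>N. a i * (0::complex)^i) = (\<Sum>i\<le>N. if i = 0 then a i else 0)"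
    by (rule sum.cong) auto
  also have "\<dots> = a 0" by (subst sum.delta) auto
  finally show ?thesis .
qed

lemma small_abstract:
  fixes c :: "nat \<Rightarrow> real \<Rightarrow> real" and N :: nat and kh R :: real
  assumes N: "N \<ge> 1"
   and cont: "\<And>i. isCont (c i) 0"
   and c1: "c 1 0 > 0"
   and roots0: "\<And>z. (\<Sum>i\<le>N. complex_of_real (c i 0) * z^i) = 0 \<Longrightarrow> Re z \<ge> 0 \<Longrightarrow> z = 0"
   and kh: "kh > 0" "\<And>\<kappa>. 0 < \<kappa> \<Longrightarrow> \<kappa> < kh \<Longrightarrow> c 0 \<kappa> > 0"
   and bnd: "\<And>\<kappa> z. 0 < \<kappa> \<Longrightarrow> \<kappa> \<le> 1 \<Longrightarrow> (\<Sum>i\<le>N. complex_of_real (c i \<kappa>) * z^i) = 0 \<Longrightarrow> cmod z \<le> R"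
  shows "\<exists>k>0. \<forall>\<kappa>. 0 < \<kappa> \<and> \<kappa> < k \<longrightarrow> (\<forall>z. (\<Sum>i\<le>N. complex_of_real (c i \<kappa>) * z^i) = 0 \<longrightarrow> Re z < 0)"
proof (rule ccontr)
  define P where "P = (\<lambda>\<kappa> z. \<Sum>i\<le>N. complex_of_real (c i \<kappa>) * z^i)"
  define DD where "DD = (\<lambda>\<kappa> z w. \<Sum>i\<le>N. complex_of_real (c i \<kappa>) * (\<Sum>k<i. w^(i - Suc k) * z^k))"
  assume H: "\<not> ?thesis"
  have ex: "\<exists>\<kappa> z. 0 < \<kappa> \<and> \<kappa> < min (inverse (real (Suc j))) (min kh 1) \<and> P \<kappa> z = 0 \<and> Re z \<ge> 0" for j
  proof -
    have "min (inverse (real (Suc j))) (min kh 1) > 0" using kh by simp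
    with H show ?thesis unfolding P_def by (meson not_less)
  qed
  then obtain ks where "\<forall>j. \<exists>z. 0 < ks j \<and> ks j < min (inverse (real (Suc j))) (min kh 1) \<and> P (ks j) z = 0 \<and> Re z \<ge> 0"
    by metis
  then obtain zs where KZ: "\<And>j. 0 < ks j \<and> ks j < min (inverse (real (Suc j))) (min kh 1) \<and> P (ks j) (zs j) = 0 \<and> Re (zs j) \<ge> 0"
    by metis
  have ks0: "ks \<longlonglongrightarrow> 0"
  proof (rule tendsto_sandwich[OF _ _ tendsto_const LIMSEQ_inverse_real_of_nat])
    show "\<forall>\<^sub>F j in sequentially. 0 \<le> ks j" using KZ by (simp add: less_imp_le)
    show "\<forall>\<^sub>F j in sequentially. ks j \<le> inverse (real (Suc j))" using KZ
      by (intro always_eventually allI) (meson less_imp_le min.strict_boundedE)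
  qed
  have zR: "cmod (zs j) \<le> R" for j
    using KZ[of j] bnd[of "ks j" "zs j"] unfolding P_def by auto
  define f where "f = (\<lambda>j. (Re (zs j), Im (zs j)))"
  have "bounded (range f)"
    unfolding bounded_iff
  proof (intro exI ballI)
    fix x assume "x \<in> range f"
    then obtain j where "x = f j" by auto
    then show "norm x \<le> R" using zR[of j] by (simp add: f_def norm_prod_def cmod_def)
  qed
  then obtain l r where r: "strict_mono r" and fl: "(f \<circ> r) \<longlonglongrightarrow> l"
    using bounded_imp_convergent_subsequence by blast
  define \<zeta> where "\<zeta> = Complex (fst l) (snd l)"
  have zlim: "(\<lambda>j. zs (r j)) \<longlonglongrightarrow> \<zeta>"
  proof -
    have "(\<lambda>j. Complex (fst ((f \<circ> r) j)) (snd ((f \<circ> r) j))) \<longlonglongrightarrow> \<zeta>"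
      unfolding \<zeta>_def by (intro tendsto_Complex tendsto_fst tendsto_snd fl)
    then show ?thesis by (simp add: f_def)
  qed
  have klim: "(\<lambda>j. ks (r j)) \<longlonglongrightarrow> 0"
    using LIMSEQ_subseq_LIMSEQ[OF ks0 r] by (simp add: o_def)
  have Plim: "(\<lambda>j. P (a j) (b j)) \<longlonglongrightarrow> P 0 \<beta>" if "a \<longlonglongrightarrow> 0" "b \<longlonglongrightarrow> \<beta>" for a b \<beta>
    unfolding P_def
    by (intro tendsto_intros isCont_tendsto_compose[OF cont] that)
  have DDlim: "(\<lambda>j. DD (a j) (b j) (d j)) \<longlonglongrightarrow> DD 0 \<beta> \<delta>" if "a \<longlonglongrightarrow> 0" "b \<longlonglongrightarrow> \<beta>" "d \<longlonglongrightarrow> \<delta>" for a b d \<beta> \<delta>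
    unfolding DD_def
    by (intro tendsto_intros isCont_tendsto_compose[OF cont] that)
  have "(\<lambda>j. P (ks (r j)) (zs (r j))) \<longlonglongrightarrow> P 0 \<zeta>" by (rule Plim[OF klim zlim])
  moreover have "(\<lambda>j. P (ks (r j)) (zs (r j))) = (\<lambda>j. 0)" using KZ by auto
  ultimately have "P 0 \<zeta> = 0" using LIMSEQ_unique tendsto_const by metis
  moreover have "Re \<zeta> \<ge> 0"
  proof -
    have "(\<lambda>j. Re (zs (r j))) \<longlonglongrightarrow> Re \<zeta>" by (intro tendsto_intros zlim)
    then show ?thesis by (rule LIMSEQ_le_const) (use KZ in auto)
  qed
  ultimately have \<zeta>0: "\<zeta> = 0" using roots0 unfolding P_def by blast
  define w where "w = (\<lambda>j. if Im (zs j) = 0 then 0 else cnj (zs j))"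
  have wlim: "(\<lambda>j. w (r j)) \<longlonglongrightarrow> 0"
  proof (rule tendsto_0_le[where K=1])
    show "\<forall>\<^sub>F j in sequentially. norm (w (r j)) \<le> norm (zs (r j)) * 1"
      by (intro always_eventually allI) (simp add: w_def)
    show "(\<lambda>j. zs (r j)) \<longlonglongrightarrow> 0" using zlim \<zeta>0 by simp
  qed
  have "(\<lambda>j. DD (ks (r j)) (zs (r j)) (w (r j))) \<longlonglongrightarrow> DD 0 0 0"
    using DDlim[OF klim zlim wlim] \<zeta>0 by simp
  moreover have "DD 0 0 0 = complex_of_real (c 1 0)"
    unfolding DD_def using outer_zero[OF N] by simp
  ultimately have "(\<lambda>j. Re (DD (ks (r j)) (zs (r j)) (w (r j)))) \<longlonglongrightarrow> c 1 0"
    using tendsto_Re by fastforce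
  from order_tendstoD(1)[OF this c1] obtain j0 where
    j0: "Re (DD (ks (r j0)) (zs (r j0)) (w (r j0))) > 0"
    by (meson eventually_sequentially order_refl)
  define \<kappa> where "\<kappa> = ks (r j0)"
  define z where "z = zs (r j0)"
  have Pz: "P \<kappa> z = 0" and Rez: "Re z \<ge> 0" and k0: "0 < \<kappa>" and kkh: "\<kappa> < kh"
    using KZ[of "r j0"] unfolding \<kappa>_def z_def by auto
  have ident: "P \<kappa> z - P \<kappa> v = (z - v) * DD \<kappa> z v" for v
    unfolding P_def DD_def by (rule poly_diff_identity)
  show False
  proof (cases "Im z = 0")
    case True
    then have wz: "w (r j0) = 0" unfolding w_def z_def by simp
    have "P \<kappa> 0 = complex_of_real (c 0 \<kappa>)" unfolding P_def by (rule sum_at_zero)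
    with ident[of 0] Pz have "- complex_of_real (c 0 \<kappa>) = z * DD \<kappa> z 0" by simp
    then have "Re (- complex_of_real (c 0 \<kappa>)) = Re (z * DD \<kappa> z 0)" by simp
    then have "- c 0 \<kappa> = Re z * Re (DD \<kappa> z 0)" using True by simp
    moreover have "Re z * Re (DD \<kappa> z 0) \<ge> 0" using Rez j0 wz unfolding \<kappa>_def z_def by simp
    moreover have "c 0 \<kappa> > 0" using kh(2) k0 kkh by blast
    ultimately show False by linarith
  next
    case False
    then have wz: "w (r j0) = cnj z" unfolding w_def z_def by simp
    have "P \<kappa> (cnj z) = cnj (P \<kappa> z)" unfolding P_def by simp
    with Pz have "P \<kappa> (cnj z) = 0" by simp
    with ident[of "cnj z"] Pz have "(z - cnj z) * DD \<kappa> z (cnj z) = 0" by simp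
    moreover have "z - cnj z \<noteq> 0" using False by (simp add: complex_eq_iff)
    ultimately have "DD \<kappa> z (cnj z) = 0" by simp
    with j0 wz show False unfolding \<kappa>_def z_def by simp
  qed
qed

lemma eig_bound:
  assumes A: "A \<in> carrier_mat n n" and ev: "eigenvalue (cmat A) z"
  shows "cmod z \<le> (\<Sum>i<n. \<Sum>j<n. \<bar>A $$ (i,j)\<bar>)"
proof -
  obtain v where v: "v \<in> carrier_vec n" "v \<noteq> 0\<^sub>v n" "cmat A *\<^sub>v v = z \<cdot>\<^sub>v v"
    using ev carrier_matD[OF cmat_carrier[OF A]] unfolding eigenvalue_def eigenvector_def by auto
  have nne: "{..<n} \<noteq> {}"
  proof
    assume "{..<n} = {}"
    then have "n = 0" by (metis lessThan_iff not_gr_zero empty_iff)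
    then show False using v by auto
  qed
  define m where "m = Max ((\<lambda>i. cmod (v $ i)) ` {..<n})"
  have "m \<in> (\<lambda>i. cmod (v $ i)) ` {..<n}" unfolding m_def using nne by (intro Max_in) auto
  then obtain i0 where i0: "i0 < n" "cmod (v $ i0) = m" by auto
  have mge: "cmod (v $ j) \<le> m" if "j < n" for j unfolding m_def using that by (intro Max_ge) auto
  have vi0: "v $ i0 \<noteq> 0"
  proof
    assume "v $ i0 = 0"
    then have "m = 0" using i0 by simp
    then have "\<forall>j<n. v $ j = 0" using mge by (metis norm_le_zero_iff)
    then have "v = 0\<^sub>v n" using v(1) by (intro eq_vecI) auto
    with v(2) show False by simp
  qed
  have row: "z * v $ i0 = (\<Sum>j<n. complex_of_real (A $$ (i0,j)) * v $ j)"
  proof -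
    have "(cmat A *\<^sub>v v) $ i0 = (z \<cdot>\<^sub>v v) $ i0" using v(3) by simp
    moreover have "(z \<cdot>\<^sub>v v) $ i0 = z * v $ i0" using v(1) i0 by simp
    moreover have "(cmat A *\<^sub>v v) $ i0 = (\<Sum>j<n. complex_of_real (A $$ (i0,j)) * v $ j)"
      using A v(1) i0 unfolding cmat_def
      by (simp add: scalar_prod_def lessThan_atLeast0)
    ultimately show ?thesis by simp
  qed
  have "cmod z * m = cmod (\<Sum>j<n. complex_of_real (A $$ (i0,j)) * v $ j)"
    using row i0 by (metis norm_mult)
  also have "\<dots> \<le> (\<Sum>j<n. \<bar>A $$ (i0,j)\<bar> * cmod (v $ j))"
    by (rule order_trans[OF norm_sum]) (simp add: norm_mult)
  also have "\<dots> \<le> (\<Sum>j<n. \<bar>A $$ (i0,j)\<bar> * m)"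
    by (intro sum_mono mult_left_mono mge) auto
  also have "\<dots> = (\<Sum>j<n. \<bar>A $$ (i0,j)\<bar>) * m" by (simp add: sum_distrib_right)
  finally have "cmod z * m \<le> (\<Sum>j<n. \<bar>A $$ (i0,j)\<bar>) * m" .
  moreover have "m > 0" using vi0 i0 by auto
  ultimately have "cmod z \<le> (\<Sum>j<n. \<bar>A $$ (i0,j)\<bar>)" by simp
  also have "\<dots> \<le> (\<Sum>i<n. \<Sum>j<n. \<bar>A $$ (i,j)\<bar>)"
    using i0 by (intro member_le_sum) (auto intro: sum_nonneg)
  finally show ?thesis .
qed

lemma lead_char_poly: "A \<in> carrier_mat n n \<Longrightarrow> lead_coeff (char_poly (A::real mat)) = 1"
  using degree_monic_char_poly[of A n] by simp

lemma pos_eig: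
  assumes A: "A \<in> carrier_mat n n" and d: "det (- A) < 0"
  shows "\<exists>z. eigenvalue (cmat A) z \<and> Re z > 0"
proof -
  let ?p = "char_poly A"
  have p0: "poly ?p 0 < 0" using poly_char_poly_0[OF A] d by simp
  obtain X where X: "\<forall>x\<ge>X. lead_coeff ?p \<le> poly ?p x"
    using poly_pinfty_gt_lc[of ?p] lead_char_poly[OF A] by auto
  define b where "b = max X 1"
  have "lead_coeff ?p \<le> poly ?p b" using X unfolding b_def by simp
  then have "poly ?p b > 0" using lead_char_poly[OF A] by simp
  moreover have "0 < b" unfolding b_def by simp
  ultimately obtain x where x: "0 < x" "x < b" "poly ?p x = 0"
    using poly_IVT_pos[of 0 b ?p] p0 by blast
  have "eigenvalue (cmat A) (complex_of_real x)"
    unfolding eig_iff[OF A] of_real_hom.poly_map_poly x(3) by simp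
  then show ?thesis using x by auto
qed

lemma p0_facts:
  assumes M: "M \<in> carrier_mat n n" and n: "n \<ge> 1"
    and dM: "det M = 0" and neg: "n_neg_eigs M = n - 1"
  shows "\<And>z. poly (map_poly complex_of_real (char_poly M)) z = 0 \<Longrightarrow> Re z \<ge> 0 \<Longrightarrow> z = 0"
    and "coeff (char_poly M) 1 > 0"
proof -
  let ?p = "char_poly M"
  let ?P = "map_poly complex_of_real ?p"
  have Pnz: "?P \<noteq> 0" by (rule char_poly_nz[OF M])
  have degP: "degree ?P = n" using degree_monic_char_poly[OF cmat_carrier[OF M]] char_poly_cmat[OF M] by simp
  define Rts where "Rts = {z. poly ?P z = 0}"
  have finR: "finite Rts" unfolding Rts_def by (rule poly_roots_finite[OF Pnz])
  have sumR: "(\<Sum>z\<in>Rts. order z ?P) \<le> n" unfolding Rts_def using order_sum_degree[OF Pnz] degP by simp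
  define Sn where "Sn = {z. poly ?P z = 0 \<and> Re z < 0}"
  have sumS: "(\<Sum>z\<in>Sn. order z ?P) = n - 1"
  proof -
    have "Sn = {z. eigenvalue (cmat M) z \<and> Re z < 0}" unfolding Sn_def using eig_iff[OF M] by blast
    then show ?thesis using neg char_poly_cmat[OF M] unfolding n_neg_eigs_def by simp
  qed
  have SR: "Sn \<subseteq> Rts" unfolding Sn_def Rts_def by auto
  have finS: "finite Sn" using finR SR finite_subset by blast
  have p00: "poly ?p 0 = 0" using poly_char_poly_0[OF M] det_0_negate[OF M] dM by simp
  have P00: "poly ?P 0 = 0" using of_real_hom.poly_map_poly[of ?p 0] p00 by simp
  have ord_pos: "order z ?P \<ge> 1" if "poly ?P z = 0" for z
    using order_root[of ?P z] that Pnz by auto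
  show roots: "z = 0" if zr: "poly ?P z = 0" and zre: "Re z \<ge> 0" for z
  proof (rule ccontr)
    assume z0: "z \<noteq> 0"
    have "Sn \<union> {0, z} \<subseteq> Rts" using SR P00 zr unfolding Rts_def by auto
    then have "(\<Sum>x\<in>Sn \<union> {0, z}. order x ?P) \<le> (\<Sum>x\<in>Rts. order x ?P)"
      by (intro sum_mono2 finR) auto
    moreover have "(\<Sum>x\<in>Sn \<union> {0, z}. order x ?P) = (\<Sum>x\<in>Sn. order x ?P) + order 0 ?P + order z ?P"
    proof -
      have d: "Sn \<inter> {0, z} = {}" using zre unfolding Sn_def by auto
      have "(\<Sum>x\<in>Sn \<union> {0, z}. order x ?P) = (\<Sum>x\<in>Sn. order x ?P) + (\<Sum>x\<in>{0,z}. order x ?P)"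
        by (rule sum.union_disjoint) (use finS d in auto)
      also have "(\<Sum>x\<in>{0,z}. order x ?P) = order 0 ?P + order z ?P" using z0 by simp
      finally show ?thesis by simp
    qed
    ultimately show False using sumR sumS ord_pos[OF P00] ord_pos[OF zr] n by linarith
  qed
  have ord0: "order 0 ?P = 1"
  proof -
    have "Sn \<union> {0} \<subseteq> Rts" using SR P00 unfolding Rts_def by auto
    then have "(\<Sum>x\<in>Sn \<union> {0}. order x ?P) \<le> (\<Sum>x\<in>Rts. order x ?P)"
      by (intro sum_mono2 finR) auto
    moreover have "(\<Sum>x\<in>Sn \<union> {0}. order x ?P) = (\<Sum>x\<in>Sn. order x ?P) + order 0 ?P"
    proof -
      have "0 \<notin> Sn" unfolding Sn_def by auto
      then show ?thesis using finS by simp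
    qed
    ultimately show ?thesis using sumR sumS ord_pos[OF P00] n by linarith
  qed
  have c1nz: "coeff ?p 1 \<noteq> 0"
  proof -
    have dnz: "pderiv ?P \<noteq> 0" using degP n pderiv_eq_0_iff[of ?P] by simp
    have "order 0 (pderiv ?P) = 0" using order_pderiv[OF Pnz P00] ord0 by simp
    then have "poly (pderiv ?P) 0 \<noteq> 0" using order_root[of "pderiv ?P" 0] dnz by simp
    then show ?thesis by (simp add: poly_0_coeff_0 coeff_pderiv coeff_map_poly)
  qed
  have ppos: "poly ?p x > 0" if x: "x > 0" for x
  proof -
    have nz: "poly ?p y \<noteq> 0" if "y > 0" for y
    proof
      assume "poly ?p y = 0"
      then have "poly ?P (complex_of_real y) = 0" using of_real_hom.poly_map_poly[of ?p y] by simp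
      from roots[OF this] that show False by simp
    qed
    show ?thesis
    proof (rule ccontr)
      assume "\<not> poly ?p x > 0"
      then have neg: "poly ?p x < 0" using nz[OF x] by linarith
      obtain X where X: "\<forall>y\<ge>X. lead_coeff ?p \<le> poly ?p y"
        using poly_pinfty_gt_lc[of ?p] lead_char_poly[OF M] by auto
      define b where "b = max X (x + 1)"
      have "lead_coeff ?p \<le> poly ?p b" using X unfolding b_def by simp
      then have "poly ?p b > 0" using lead_char_poly[OF M] by simp
      moreover have "x < b" unfolding b_def by simp
      ultimately obtain y where "x < y" "y < b" "poly ?p y = 0"
        using poly_IVT_pos[of x b ?p] neg by blast
      with nz[of y] x show False by simp
    qed
  qed
  show "coeff ?p 1 > 0"
  proof (rule ccontr)
    assume "\<not> coeff ?p 1 > 0"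
    then have lt: "poly (pderiv ?p) 0 < 0" using c1nz by (simp add: poly_0_coeff_0 coeff_pderiv)
    obtain d where d: "d > 0" "\<forall>h>0. h < d \<longrightarrow> poly ?p (0 + h) < poly ?p 0"
      using DERIV_neg_dec_right[OF poly_DERIV lt] by blast
    then have "poly ?p (d/2) < 0" using p00 by auto
    with ppos[of "d/2"] d(1) show False by simp
  qed
qed

lemma qform_sum: assumes A: "A \<in> carrier_mat n n" and x: "x \<in> carrier_vec n"
  shows "qform A x = (\<Sum>i<n. \<Sum>j<n. x $ i * A $$ (i,j) * x $ j)"
proof -
  have "qform A x = (\<Sum>i<n. x $ i * (A *\<^sub>v x) $ i)"
    unfolding qform_def scalar_prod_def using A x by (simp add: lessThan_atLeast0)
  also have "\<dots> = (\<Sum>i<n. \<Sum>j<n. x $ i * A $$ (i,j) * x $ j)"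
  proof (rule sum.cong[OF refl])
    fix i assume i: "i \<in> {..<n}"
    have "(A *\<^sub>v x) $ i = (\<Sum>j<n. A $$ (i,j) * x $ j)"
      using A x i by (simp add: scalar_prod_def lessThan_atLeast0)
    then show "x $ i * (A *\<^sub>v x) $ i = (\<Sum>j<n. x $ i * A $$ (i,j) * x $ j)"
      by (simp add: sum_distrib_left mult_ac)
  qed
  finally show ?thesis .
qed

lemma qform_add: assumes "A \<in> carrier_mat n n" "B \<in> carrier_mat n n" "x \<in> carrier_vec n"
  shows "qform (A + B) x = qform A x + qform B x"
proof -
  have "qform (A + B) x = (\<Sum>i<n. \<Sum>j<n. x $ i * (A + B) $$ (i,j) * x $ j)"
    by (rule qform_sum) (use assms in auto)
  also have "\<dots> = (\<Sum>i<n. \<Sum>j<n. x $ i * A $$ (i,j) * x $ j + x $ i * B $$ (i,j) * x $ j)"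
    using assms by (intro sum.cong refl) (auto simp: algebra_simps)
  finally show ?thesis using assms by (simp add: qform_sum sum.distrib)
qed

lemma qform_smult: assumes "A \<in> carrier_mat n n" "x \<in> carrier_vec n"
  shows "qform (s \<cdot>\<^sub>m A) x = s * qform A x"
proof -
  have "qform (s \<cdot>\<^sub>m A) x = (\<Sum>i<n. \<Sum>j<n. x $ i * (s \<cdot>\<^sub>m A) $$ (i,j) * x $ j)"
    by (rule qform_sum) (use assms in auto)
  also have "\<dots> = (\<Sum>i<n. \<Sum>j<n. s * (x $ i * A $$ (i,j) * x $ j))"
    using assms by (intro sum.cong refl) (auto simp: algebra_simps)
  finally show ?thesis using assms by (simp add: qform_sum sum_distrib_left)
qed

lemma qform_bound: assumes A: "A \<in> carrier_mat n n" and x: "x \<in> carrier_vec n"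
  shows "qform A x \<le> (\<Sum>i<n. \<Sum>j<n. \<bar>A $$ (i,j)\<bar>) * (\<Sum>i<n. \<bar>x $ i\<bar>)^2"
proof -
  define s where "s = (\<Sum>i<n. \<bar>x $ i\<bar>)"
  have xs: "\<bar>x $ i\<bar> \<le> s" if "i < n" for i
    unfolding s_def using that by (intro member_le_sum) auto
  have s0: "s \<ge> 0" unfolding s_def by (intro sum_nonneg) auto
  have "qform A x = (\<Sum>i<n. \<Sum>j<n. x $ i * A $$ (i,j) * x $ j)" by (rule qform_sum[OF A x])
  also have "\<dots> \<le> (\<Sum>i<n. \<Sum>j<n. \<bar>A $$ (i,j)\<bar> * s^2)"
  proof (intro sum_mono)
    fix i j assume i: "i \<in> {..<n}" and j: "j \<in> {..<n}"
    have "x $ i * A $$ (i,j) * x $ j \<le> \<bar>x $ i * A $$ (i,j) * x $ j\<bar>" by simp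
    also have "\<dots> = \<bar>A $$ (i,j)\<bar> * (\<bar>x $ i\<bar> * \<bar>x $ j\<bar>)" by (simp add: abs_mult)
    also have "\<dots> \<le> \<bar>A $$ (i,j)\<bar> * (s * s)"
      using xs i j s0 by (intro mult_left_mono mult_mono) auto
    finally show "x $ i * A $$ (i,j) * x $ j \<le> \<bar>A $$ (i,j)\<bar> * s^2" by (simp add: power2_eq_square)
  qed
  also have "\<dots> = (\<Sum>i<n. \<Sum>j<n. \<bar>A $$ (i,j)\<bar>) * s^2" by (simp add: sum_distrib_right)
  finally show ?thesis unfolding s_def .
qed

lemma negdef_eig:
  assumes A: "A \<in> carrier_mat n n"
    and nd: "\<And>x. x \<in> carrier_vec n \<Longrightarrow> x \<noteq> 0\<^sub>v n \<Longrightarrow> qform A x < 0"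
    and ev: "eigenvalue (cmat A) z"
  shows "Re z < 0"
proof -
  obtain v where v: "v \<in> carrier_vec n" "v \<noteq> 0\<^sub>v n" "cmat A *\<^sub>v v = z \<cdot>\<^sub>v v"
    using ev carrier_matD[OF cmat_carrier[OF A]] unfolding eigenvalue_def eigenvector_def by auto
  have row: "(\<Sum>j<n. complex_of_real (A $$ (i,j)) * v $ j) = z * v $ i" if i: "i < n" for i
  proof -
    have "(cmat A *\<^sub>v v) $ i = (z \<cdot>\<^sub>v v) $ i" using v(3) by simp
    moreover have "(z \<cdot>\<^sub>v v) $ i = z * v $ i" using v(1) i by simp
    moreover have "(cmat A *\<^sub>v v) $ i = (\<Sum>j<n. complex_of_real (A $$ (i,j)) * v $ j)"
      using A v(1) i unfolding cmat_def
      by (simp add: scalar_prod_def lessThan_atLeast0)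
    ultimately show ?thesis by simp
  qed
  define xr where "xr = vec n (\<lambda>i. Re (v $ i))"
  define xi where "xi = vec n (\<lambda>i. Im (v $ i))"
  have xrc: "xr \<in> carrier_vec n" and xic: "xi \<in> carrier_vec n" unfolding xr_def xi_def by auto
  define S where "S = (\<Sum>i<n. (Re (v $ i))^2 + (Im (v $ i))^2)"
  have "(\<Sum>i<n. cnj (v $ i) * (\<Sum>j<n. complex_of_real (A $$ (i,j)) * v $ j)) = (\<Sum>i<n. z * (cnj (v $ i) * v $ i))"
  proof (rule sum.cong[OF refl])
    fix i assume "i \<in> {..<n}"
    then have "(\<Sum>j<n. complex_of_real (A $$ (i,j)) * v $ j) = z * v $ i" using row by simp
    then show "cnj (v $ i) * (\<Sum>j<n. complex_of_real (A $$ (i,j)) * v $ j) = z * (cnj (v $ i) * v $ i)"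
      by (simp add: mult_ac)
  qed
  then have "Re (\<Sum>i<n. cnj (v $ i) * (\<Sum>j<n. complex_of_real (A $$ (i,j)) * v $ j)) = Re (\<Sum>i<n. z * (cnj (v $ i) * v $ i))"
    by simp
  moreover have "Re (\<Sum>i<n. cnj (v $ i) * (\<Sum>j<n. complex_of_real (A $$ (i,j)) * v $ j)) = qform A xr + qform A xi"
  proof -
    have r: "qform A xr = (\<Sum>i<n. \<Sum>j<n. Re (v $ i) * A $$ (i,j) * Re (v $ j))"
      unfolding qform_sum[OF A xrc] by (intro sum.cong refl) (auto simp: xr_def)
    have i: "qform A xi = (\<Sum>i<n. \<Sum>j<n. Im (v $ i) * A $$ (i,j) * Im (v $ j))"
      unfolding qform_sum[OF A xic] by (intro sum.cong refl) (auto simp: xi_def)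
    show ?thesis unfolding r i
      by (simp add: Re_sum sum_distrib_left sum.distrib[symmetric] algebra_simps)
  qed
  moreover have "Re (\<Sum>i<n. z * (cnj (v $ i) * v $ i)) = Re z * S"
    unfolding S_def by (simp add: Re_sum sum_distrib_left power2_eq_square algebra_simps)
  ultimately have eq: "qform A xr + qform A xi = Re z * S" by simp
  have le0: "qform A y \<le> 0" if "y \<in> carrier_vec n" for y
    using nd[OF that] that A by (cases "y = 0\<^sub>v n") (auto simp: qform_def)
  have "xr \<noteq> 0\<^sub>v n \<or> xi \<noteq> 0\<^sub>v n"
  proof (rule ccontr)
    assume "\<not> ?thesis"
    then have "\<forall>i<n. Re (v $ i) = 0 \<and> Im (v $ i) = 0" unfolding xr_def xi_def
      by (metis index_vec index_zero_vec(1))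
    then have "v = 0\<^sub>v n" using v(1) by (intro eq_vecI) (auto simp: complex_eq_iff)
    with v(2) show False by simp
  qed
  then have neg: "qform A xr + qform A xi < 0"
    using nd[OF xrc] nd[OF xic] le0[OF xrc] le0[OF xic] by fastforce
  have "S \<ge> 0" unfolding S_def by (intro sum_nonneg) auto
  with eq neg show ?thesis by (metis mult_nonneg_nonneg not_le)
qed

lemma compact_box: "compact (PiE UNIV (\<lambda>i::nat. if i < n then {-1..1} else {0::real}))"
proof -
  have "compactin (product_topology (\<lambda>i. euclidean) UNIV) (PiE UNIV (\<lambda>i::nat. if i < n then {-1..1} else {0::real}))"
    unfolding compactin_PiE by (auto simp: compactin_euclidean_iff)
  then show ?thesis unfolding euclidean_product_topology compactin_euclidean_iff .
qed

lemma negdef_uniform: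
  assumes Q: "Q \<in> carrier_mat n n" and n: "n \<ge> 1" and nd: "neg_def n Q"
  shows "\<exists>c>0. \<forall>x\<in>carrier_vec n. qform Q x \<le> - c * (\<Sum>i<n. \<bar>x $ i\<bar>)^2"
proof -
  define T where "T = PiE UNIV (\<lambda>i::nat. if i < n then {-1..1} else {0::real}) \<inter> {y. (\<Sum>i<n. \<bar>y i\<bar>) = 1}"
  have ci: "continuous_on UNIV (\<lambda>y::nat \<Rightarrow> real. y i)" for i by simp
  have cT: "compact T" unfolding T_def
  proof (rule compact_Int_closed[OF compact_box])
    have "continuous_on UNIV (\<lambda>y::nat \<Rightarrow> real. \<Sum>i<n. \<bar>y i\<bar>)"
      by (intro continuous_intros ci)
    then show "closed {y::nat \<Rightarrow> real. (\<Sum>i<n. \<bar>y i\<bar>) = 1}"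
      by (rule closed_Collect_eq[OF _ continuous_on_const])
  qed
  define f where "f = (\<lambda>y::nat \<Rightarrow> real. \<Sum>i<n. \<Sum>j<n. y i * Q $$ (i,j) * y j)"
  have "continuous_on UNIV f" unfolding f_def
    by (intro continuous_intros ci)
  then have cf: "continuous_on T f" by (rule continuous_on_subset) simp
  define e0 where "e0 = (\<lambda>i::nat. if i = 0 then 1 else (0::real))"
  have "e0 \<in> T" unfolding T_def e0_def using n by (auto simp: PiE_UNIV_domain)
  then have ne: "f ` T \<noteq> {}" by auto
  obtain m where m: "m \<in> f ` T" "\<forall>t\<in>f ` T. t \<le> m"
    using compact_attains_sup[OF compact_continuous_image[OF cf cT] ne] by blast
  then obtain ys where ys: "ys \<in> T" "m = f ys" by auto
  have fq: "f y = qform Q (vec n y)" for y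
    unfolding f_def qform_sum[OF Q vec_carrier] by (intro sum.cong refl) auto
  have "vec n ys \<noteq> 0\<^sub>v n"
  proof
    assume "vec n ys = 0\<^sub>v n"
    then have "\<forall>i<n. ys i = 0" by (metis index_vec index_zero_vec(1))
    then have "(\<Sum>i<n. \<bar>ys i\<bar>) = 0" by simp
    with ys(1) show False unfolding T_def by simp
  qed
  then have mneg: "m < 0" using nd ys fq unfolding neg_def_def by auto
  show ?thesis
  proof (intro exI[of _ "-m"] conjI ballI)
    show "0 < - m" using mneg by simp
    fix x :: "real vec" assume x: "x \<in> carrier_vec n"
    define s where "s = (\<Sum>i<n. \<bar>x $ i\<bar>)"
    have s0: "s \<ge> 0" unfolding s_def by (intro sum_nonneg) auto
    show "qform Q x \<le> - (- m) * (\<Sum>i<n. \<bar>x $ i\<bar>)^2"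
    proof (cases "s = 0")
      case True
      then have "\<forall>i\<in>{..<n}. \<bar>x $ i\<bar> = 0" unfolding s_def
        by (subst sum_nonneg_eq_0_iff[symmetric]) auto
      then have "x = 0\<^sub>v n" using x by (intro eq_vecI) auto
      then show ?thesis using True Q unfolding s_def by (simp add: qform_def)
    next
      case False
      then have sp: "s > 0" using s0 by simp
      define y where "y = (\<lambda>i. if i < n then x $ i / s else 0)"
      have yT: "y \<in> T" unfolding T_def
      proof (intro IntI CollectI)
        have "\<bar>x $ i\<bar> \<le> s" if "i < n" for i
          unfolding s_def using that by (intro member_le_sum) auto
        then have xb: "- s \<le> x $ i \<and> x $ i \<le> s" if "i < n" for i
          using abs_le_D1[of "x $ i" s] abs_le_D2[of "x $ i" s] that by force
        have "y i \<in> (if i < n then {-1..1} else {0::real})" for i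
        proof (cases "i < n")
          case True
          have "-1 \<le> x $ i / s" using xb[OF True] sp by (simp add: le_divide_eq)
          moreover have "x $ i / s \<le> 1" using xb[OF True] sp by (simp add: divide_le_eq)
          ultimately show ?thesis using True unfolding y_def by simp
        next
          case False
          then show ?thesis unfolding y_def by simp
        qed
        then show "y \<in> PiE UNIV (\<lambda>i::nat. if i < n then {-1..1} else {0::real})"
          unfolding PiE_UNIV_domain by blast
        have "(\<Sum>i<n. \<bar>y i\<bar>) = (\<Sum>i<n. \<bar>x $ i\<bar> / s)"
          using sp by (intro sum.cong refl) (auto simp: y_def)
        also have "\<dots> = s / s" unfolding s_def by (rule sum_divide_distrib[symmetric])
        also have "\<dots> = 1" using sp by simp
        finally show "(\<Sum>i<n. \<bar>y i\<bar>) = 1" .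
      qed
      have "f y \<le> m" using m(2) yT by auto
      moreover have "f y = qform Q x / s^2"
      proof -
        have "f y = (\<Sum>i<n. \<Sum>j<n. (x $ i * Q $$ (i,j) * x $ j) / s^2)"
          unfolding f_def by (intro sum.cong refl) (auto simp: y_def power2_eq_square)
        also have "\<dots> = qform Q x / s^2"
          unfolding qform_sum[OF Q x] sum_divide_distrib by simp
        finally show ?thesis .
      qed
      ultimately have "qform Q x / s^2 \<le> m" by simp
      then have "qform Q x \<le> m * s^2" using sp by (simp add: divide_le_eq)
      then show ?thesis unfolding s_def by simp
    qed
  qed
qed

lemma large_kappa:
  assumes M: "M \<in> carrier_mat n n" and J2: "J2 \<in> carrier_mat n n" and J4: "J4 \<in> carrier_mat n n"
    and n: "n \<ge> 1" and nsd: "neg_semidef n J4"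
    and nd: "neg_def n ((kb^2) \<cdot>\<^sub>m J2 + (kb^4) \<cdot>\<^sub>m J4)"
  shows "\<exists>\<kappa>>K0. \<forall>x\<in>carrier_vec n. x \<noteq> 0\<^sub>v n \<longrightarrow> qform (M + (\<kappa>^2) \<cdot>\<^sub>m J2 + (\<kappa>^4) \<cdot>\<^sub>m J4) x < 0"
proof -
  let ?Q = "(kb^2) \<cdot>\<^sub>m J2 + (kb^4) \<cdot>\<^sub>m J4"
  have Qc: "?Q \<in> carrier_mat n n" using J2 J4 by auto
  have qQ: "qform ?Q x = kb^2 * qform J2 x + kb^4 * qform J4 x" if "x \<in> carrier_vec n" for x
  proof -
    have "qform ?Q x = qform ((kb^2) \<cdot>\<^sub>m J2) x + qform ((kb^4) \<cdot>\<^sub>m J4) x"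
      by (rule qform_add) (use that J2 J4 in auto)
    then show ?thesis using qform_smult[OF J2 that] qform_smult[OF J4 that] by simp
  qed
  have kb0: "kb \<noteq> 0"
  proof
    assume "kb = 0"
    have u: "unit_vec n 0 \<in> carrier_vec n" "unit_vec n 0 \<noteq> 0\<^sub>v n"
      using n by (auto simp: unit_vec_def vec_eq_iff)
    then have "qform ?Q (unit_vec n 0) < 0" using nd unfolding neg_def_def by blast
    then show False using qQ[OF u(1)] \<open>kb = 0\<close> by simp
  qed
  obtain c where c: "c > 0" "\<forall>x\<in>carrier_vec n. qform ?Q x \<le> - c * (\<Sum>i<n. \<bar>x $ i\<bar>)^2"
    using negdef_uniform[OF Qc n nd] by blast
  define K where "K = (\<Sum>i<n. \<Sum>j<n. \<bar>M $$ (i,j)\<bar>)"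
  have K0: "K \<ge> 0" unfolding K_def by (intro sum_nonneg) auto
  define t where "t = max 1 (max ((K + 1) / c) ((\<bar>K0\<bar> + 1) / \<bar>kb\<bar>))"
  have t1: "t \<ge> 1" unfolding t_def by simp
  have tK: "t * c \<ge> K + 1"
  proof -
    have "(K + 1) / c \<le> t" unfolding t_def by simp
    then show ?thesis using c(1) by (simp add: pos_divide_le_eq)
  qed
  have tt: "t^2 * c \<ge> K + 1"
  proof -
    have "t^2 * c = t * (t * c)" by (simp add: power2_eq_square)
    also have "\<dots> \<ge> 1 * (t * c)" using t1 c(1) by (intro mult_right_mono) auto
    finally show ?thesis using tK by simp
  qed
  define \<kappa> where "\<kappa> = t * \<bar>kb\<bar>"
  have kK: "\<kappa> > K0"
  proof -
    have "t \<ge> (\<bar>K0\<bar> + 1) / \<bar>kb\<bar>" unfolding t_def by simp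
    then have "t * \<bar>kb\<bar> \<ge> \<bar>K0\<bar> + 1" using kb0 by (simp add: divide_le_eq)
    then show ?thesis unfolding \<kappa>_def by linarith
  qed
  show ?thesis
  proof (intro exI[of _ \<kappa>] conjI kK ballI impI)
    fix x :: "real vec" assume x: "x \<in> carrier_vec n" and xnz: "x \<noteq> 0\<^sub>v n"
    define s where "s = (\<Sum>i<n. \<bar>x $ i\<bar>)"
    have sp: "s > 0"
    proof -
      have "s \<ge> 0" unfolding s_def by (intro sum_nonneg) auto
      moreover have "s \<noteq> 0"
      proof
        assume "s = 0"
        then have "\<forall>i\<in>{..<n}. \<bar>x $ i\<bar> = 0" unfolding s_def
          by (subst sum_nonneg_eq_0_iff[symmetric]) auto
        then have "x = 0\<^sub>v n" using x by (intro eq_vecI) auto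
        with xnz show False by simp
      qed
      ultimately show ?thesis by simp
    qed
    define a where "a = qform J2 x"
    define b where "b = qform J4 x"
    have b0: "b \<le> 0" using nsd x unfolding neg_semidef_def b_def by blast
    have Qx: "kb^2 * a + kb^4 * b \<le> - c * s^2" 
    proof -
      have "qform ?Q x \<le> - c * (\<Sum>i<n. \<bar>x $ i\<bar>)^2" using c(2) x by blast
      then show ?thesis using qQ[OF x] unfolding a_def b_def s_def by simp
    qed
    have Mx: "qform M x \<le> K * s^2" using qform_bound[OF M x] unfolding K_def s_def .
    have eq: "qform (M + (\<kappa>^2) \<cdot>\<^sub>m J2 + (\<kappa>^4) \<cdot>\<^sub>m J4) x = qform M x + \<kappa>^2 * a + \<kappa>^4 * b"
    proof -
      have "qform (M + (\<kappa>^2) \<cdot>\<^sub>m J2 + (\<kappa>^4) \<cdot>\<^sub>m J4) x = qform (M + (\<kappa>^2) \<cdot>\<^sub>m J2) x + qform ((\<kappa>^4) \<cdot>\<^sub>m J4) x"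
        by (rule qform_add) (use M J2 J4 x in auto)
      also have "qform (M + (\<kappa>^2) \<cdot>\<^sub>m J2) x = qform M x + qform ((\<kappa>^2) \<cdot>\<^sub>m J2) x"
        by (rule qform_add) (use M J2 J4 x in auto)
      finally show ?thesis using qform_smult[OF J2 x] qform_smult[OF J4 x] unfolding a_def b_def by simp
    qed
    have k2: "\<kappa>^2 = t^2 * kb^2" unfolding \<kappa>_def by (simp add: power_mult_distrib)
    have k4: "\<kappa>^4 = t^4 * kb^4" unfolding \<kappa>_def by (simp add: power_mult_distrib power_even_abs_numeral)
    have t42: "t^2 \<le> t^4" using t1 by (intro power_increasing) auto
    have kb4b: "kb^4 * b \<le> 0" using b0 by (simp add: mult_nonneg_nonpos)
    have m1: "t^4 * (kb^4 * b) \<le> t^2 * (kb^4 * b)" using t42 kb4b by (rule mult_right_mono_neg)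
    have "\<kappa>^2 * a + \<kappa>^4 * b = t^2 * (kb^2 * a) + t^4 * (kb^4 * b)"
      unfolding k2 k4 by (simp only: mult.assoc)
    also have "\<dots> \<le> t^2 * (kb^2 * a) + t^2 * (kb^4 * b)" using m1 by linarith
    also have "\<dots> = t^2 * (kb^2 * a + kb^4 * b)" by (simp only: distrib_left)
    also have "\<dots> \<le> t^2 * (- c * s^2)" using Qx by (intro mult_left_mono) auto
    finally have "qform (M + (\<kappa>^2) \<cdot>\<^sub>m J2 + (\<kappa>^4) \<cdot>\<^sub>m J4) x \<le> K * s^2 - t^2 * c * s^2"
      using eq Mx by simp
    also have "\<dots> = (K - t^2 * c) * s^2" by (simp only: left_diff_distrib)
    also have "\<dots> < 0" using tt sp by (intro mult_neg_pos) auto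
    finally show "qform (M + (\<kappa>^2) \<cdot>\<^sub>m J2 + (\<kappa>^4) \<cdot>\<^sub>m J4) x < 0" .
  qed
qed

lemma det_bound:
  assumes A: "A \<in> carrier_mat n n" and b: "\<And>i j. i < n \<Longrightarrow> j < n \<Longrightarrow> \<bar>A $$ (i,j)\<bar> \<le> K"
  shows "\<bar>det (A :: real mat)\<bar> \<le> fact n * K^n"
proof -
  have "\<bar>det A\<bar> = \<bar>\<Sum>p\<in>{p. p permutes {0..<n}}. signof p * (\<Prod>i = 0..<n. A $$ (i, p i))\<bar>"
    by (simp add: det_def'[OF A])
  also have "\<dots> \<le> (\<Sum>p\<in>{p. p permutes {0..<n}}. \<bar>signof p * (\<Prod>i = 0..<n. A $$ (i, p i))\<bar>)"
    by (rule sum_abs)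
  also have "\<dots> \<le> (\<Sum>p\<in>{p. p permutes {0..<n}}. K^n)"
  proof (rule sum_mono)
    fix p assume "p \<in> {p. p permutes {0..<n}}"
    then have p: "p permutes {0..<n}" by simp
    have pi: "i < n \<Longrightarrow> p i < n" for i using permutes_in_image[OF p, of i] by simp
    have "\<bar>signof p * (\<Prod>i = 0..<n. A $$ (i, p i))\<bar> = (\<Prod>i = 0..<n. \<bar>A $$ (i, p i)\<bar>)"
      by (cases p rule: sign_cases) (simp_all add: abs_prod)
    also have "\<dots> \<le> (\<Prod>i = 0..<n. K)"
      by (rule prod_mono) (auto intro: b pi)
    finally show "\<bar>signof p * (\<Prod>i = 0..<n. A $$ (i, p i))\<bar> \<le> K^n" by simp
  qed
  also have "\<dots> = fact n * K^n"
    by (simp add: card_permutations)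
  finally show ?thesis .
qed

lemma Dset_entry:
  assumes B: "B \<in> carrier_mat n m" and C: "C \<in> carrier_mat m n" and D: "D \<in> Dset m lo hi"
    and i: "i < n" and j: "j < n"
  shows "(B * D * C) $$ (i,j) = (\<Sum>l<m. B $$ (i,l) * D $$ (l,l) * C $$ (l,j))"
proof -
  have Dc: "D \<in> carrier_mat m m" and Dd: "diagonal_mat D" using D unfolding Dset_def by auto
  have BD: "(B * D) $$ (i,l) = B $$ (i,l) * D $$ (l,l)" if l: "l < m" for l
  proof -
    have "(B * D) $$ (i,l) = (\<Sum>k<m. B $$ (i,k) * D $$ (k,l))"
      using B Dc i l by (simp add: scalar_prod_def lessThan_atLeast0)
    also have "\<dots> = (\<Sum>k<m. if k = l then B $$ (i,l) * D $$ (l,l) else 0)"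
      using Dd Dc l by (intro sum.cong refl) (auto simp: diagonal_mat_def)
    also have "\<dots> = B $$ (i,l) * D $$ (l,l)" using l by (subst sum.delta) auto
    finally show ?thesis .
  qed
  define BD where "BD = B * D"
  have BDc: "BD \<in> carrier_mat n m" unfolding BD_def using B Dc by simp
  have "(BD * C) $$ (i,j) = (\<Sum>l<m. BD $$ (i,l) * C $$ (l,j))"
    using BDc C i j by (simp add: scalar_prod_def lessThan_atLeast0)
  then have "(B * D * C) $$ (i,j) = (\<Sum>l<m. (B * D) $$ (i,l) * C $$ (l,j))" unfolding BD_def .
  also have "\<dots> = (\<Sum>l<m. B $$ (i,l) * D $$ (l,l) * C $$ (l,j))"
    by (intro sum.cong refl) (auto simp: BD)
  finally show ?thesis .
qed

lemma Psi_bdd: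
  assumes B: "B \<in> carrier_mat n m" and C: "C \<in> carrier_mat m n"
    and J2: "J2 \<in> carrier_mat n n" and J4: "J4 \<in> carrier_mat n n"
    and bounds: "\<forall>j<m. 0 \<le> lo j \<and> lo j \<le> hi j"
  shows "bdd_below ((\<lambda>D. det (- Jmat B C J2 J4 D \<kappa>)) ` Dset m lo hi)"
    and "bdd_above ((\<lambda>D. det (- Jmat B C J2 J4 D \<kappa>)) ` Dset m lo hi)"
proof -
  define K where "K = (\<Sum>i<n. \<Sum>l<m. \<Sum>j<n. \<bar>B $$ (i,l)\<bar> * hi l * \<bar>C $$ (l,j)\<bar>)
     + \<kappa>^2 * (\<Sum>i<n. \<Sum>j<n. \<bar>J2 $$ (i,j)\<bar>) + \<kappa>^4 * (\<Sum>i<n. \<Sum>j<n. \<bar>J4 $$ (i,j)\<bar>)"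
  have hi0: "l < m \<Longrightarrow> hi l \<ge> 0" for l using bounds by force
  have main: "\<bar>det (- Jmat B C J2 J4 D \<kappa>)\<bar> \<le> fact n * K^n" if D: "D \<in> Dset m lo hi" for D
  proof (rule det_bound)
    have Dc: "D \<in> carrier_mat m m" using D unfolding Dset_def by auto
    show "- Jmat B C J2 J4 D \<kappa> \<in> carrier_mat n n" using B C J2 J4 Dc unfolding Jmat_def by auto
    fix i j assume i: "i < n" and j: "j < n"
    have Db: "\<bar>D $$ (l,l)\<bar> \<le> hi l" if "l < m" for l
      using D that bounds unfolding Dset_def by force
    have e: "(- Jmat B C J2 J4 D \<kappa>) $$ (i,j) = - ((B * D * C) $$ (i,j) + \<kappa>^2 * J2 $$ (i,j) + \<kappa>^4 * J4 $$ (i,j))"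
      using B C J2 J4 Dc i j unfolding Jmat_def by auto
    have b1: "\<bar>(B * D * C) $$ (i,j)\<bar> \<le> (\<Sum>i<n. \<Sum>l<m. \<Sum>j<n. \<bar>B $$ (i,l)\<bar> * hi l * \<bar>C $$ (l,j)\<bar>)"
    proof -
      have "\<bar>(B * D * C) $$ (i,j)\<bar> \<le> (\<Sum>l<m. \<bar>B $$ (i,l) * D $$ (l,l) * C $$ (l,j)\<bar>)"
        unfolding Dset_entry[OF B C D i j] by (rule sum_abs)
      also have "\<dots> \<le> (\<Sum>l<m. \<bar>B $$ (i,l)\<bar> * hi l * \<bar>C $$ (l,j)\<bar>)"
        using Db by (intro sum_mono) (auto simp: abs_mult intro!: mult_right_mono mult_left_mono)
      also have "\<dots> \<le> (\<Sum>l<m. \<Sum>j<n. \<bar>B $$ (i,l)\<bar> * hi l * \<bar>C $$ (l,j)\<bar>)"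
        using j hi0 by (intro sum_mono member_le_sum[of j]) auto
      also have "\<dots> \<le> (\<Sum>i<n. \<Sum>l<m. \<Sum>j<n. \<bar>B $$ (i,l)\<bar> * hi l * \<bar>C $$ (l,j)\<bar>)"
        using i hi0 by (intro member_le_sum[of i]) (auto intro!: sum_nonneg)
      finally show ?thesis .
    qed
    have b2: "\<bar>J2 $$ (i,j)\<bar> \<le> (\<Sum>i<n. \<Sum>j<n. \<bar>J2 $$ (i,j)\<bar>)"
      using i j by (intro order_trans[OF member_le_sum[of j] member_le_sum[of i]]) (auto intro: sum_nonneg)
    have b4: "\<bar>J4 $$ (i,j)\<bar> \<le> (\<Sum>i<n. \<Sum>j<n. \<bar>J4 $$ (i,j)\<bar>)"
      using i j by (intro order_trans[OF member_le_sum[of j] member_le_sum[of i]]) (auto intro: sum_nonneg)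
    have "\<bar>(- Jmat B C J2 J4 D \<kappa>) $$ (i,j)\<bar> \<le> \<bar>(B * D * C) $$ (i,j)\<bar> + \<kappa>^2 * \<bar>J2 $$ (i,j)\<bar> + \<kappa>^4 * \<bar>J4 $$ (i,j)\<bar>"
    proof -
      have t: "\<bar>- a - p - q\<bar> \<le> \<bar>a\<bar> + \<bar>p\<bar> + \<bar>q\<bar>" for a p q :: real by arith
      have k4: "\<bar>\<kappa>^4\<bar> = \<kappa>^4" by (simp add: power_even_abs_numeral)
      show ?thesis unfolding e using t[of "(B * D * C) $$ (i,j)" "\<kappa>^2 * J2 $$ (i,j)" "\<kappa>^4 * J4 $$ (i,j)"]
        by (simp add: abs_mult k4)
    qed
    also have "\<dots> \<le> K" unfolding K_def
      using b1 b2 b4 by (intro add_mono mult_left_mono) auto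
    finally show "\<bar>(- Jmat B C J2 J4 D \<kappa>) $$ (i,j)\<bar> \<le> K" .
  qed
  show "bdd_below ((\<lambda>D. det (- Jmat B C J2 J4 D \<kappa>)) ` Dset m lo hi)"
    unfolding bdd_below_def using main by (intro exI[of _ "- (fact n * K^n)"]) (force simp: abs_le_iff)
  show "bdd_above ((\<lambda>D. det (- Jmat B C J2 J4 D \<kappa>)) ` Dset m lo hi)"
    unfolding bdd_above_def using main by (intro exI[of _ "fact n * K^n"]) (force simp: abs_le_iff)
qed

theorem theorem3:
  fixes n m :: nat and B C J2 J4 :: "real mat" and lo hi :: "nat \<Rightarrow> real"
  assumes n1: "n \<ge> 1" and m1: "m \<ge> 1"
    and B: "B \<in> carrier_mat n m" "\<forall>i<n. \<forall>j<m. B $$ (i,j) \<in> \<int>"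
    and C: "C \<in> carrier_mat m n" "\<forall>i<m. \<forall>j<n. C $$ (i,j) \<in> \<int>"
    and bounds: "\<forall>j<m. 0 \<le> lo j \<and> lo j \<le> hi j"
    and J2: "J2 \<in> carrier_mat n n" "transpose_mat J2 = J2"
    and J4: "J4 \<in> carrier_mat n n" "transpose_mat J4 = J4"
    and A1_sing: "\<forall>D\<in>Dset m lo hi. det (B * D * C) = 0"
    and A1_neg: "\<forall>D\<in>Dset m lo hi. n_neg_eigs (B * D * C) = n - 1"
    and A1_v: "\<exists>v\<in>carrier_vec n. v \<noteq> 0\<^sub>v n \<and> (\<forall>i<n. v $ i \<ge> 0) \<and> transpose_mat B *\<^sub>v v = 0\<^sub>v m"
    and A2_J2: "indefinite_mat n J2"
    and A2_J4: "neg_semidef n J4"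
    and A2_kbar: "\<exists>kb. neg_def n ((kb^2) \<cdot>\<^sub>m J2 + (kb^4) \<cdot>\<^sub>m J4)"
    and Psi_minus_ip: "initially_positive (Psi_minus m lo hi B C J2 J4)"
    and Psi_plus_nsc: "negative_sign_change (Psi_plus m lo hi B C J2 J4)"
  shows "\<forall>D\<in>Dset m lo hi.
           microphase_separation (\<lambda>\<kappa>. spectral_abscissa (Jmat B C J2 J4 D \<kappa>))"
proof
  fix D assume D: "D \<in> Dset m lo hi"
  have Dc: "D \<in> carrier_mat m m" using D unfolding Dset_def by auto
  define M where "M = B * D * C"
  have Mc: "M \<in> carrier_mat n n" unfolding M_def using B(1) C(1) Dc by auto
  define J where "J = (\<lambda>\<kappa>. Jmat B C J2 J4 D \<kappa>)"
  have Jc: "J \<kappa> \<in> carrier_mat n n" for \<kappa> unfolding J_def Jmat_def using B(1) C(1) Dc J2(1) J4(1) by auto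
  have JM: "J \<kappa> = M + (\<kappa>^2) \<cdot>\<^sub>m J2 + (\<kappa>^4) \<cdot>\<^sub>m J4" for \<kappa> unfolding J_def Jmat_def M_def ..
  have Jent: "J \<kappa> $$ (i,j) = M $$ (i,j) + \<kappa>^2 * J2 $$ (i,j) + \<kappa>^4 * J4 $$ (i,j)" if "i < n" "j < n" for \<kappa> i j
    unfolding JM using that Mc J2(1) J4(1) by auto
  have J0: "J 0 = M" by (rule eq_matI) (use Jc Mc Jent in auto)
  define c where "c = (\<lambda>i \<kappa>. coeff (char_poly (J \<kappa>)) i)"
  have cont: "isCont (c i) 0" for i
    unfolding c_def
  proof (rule cp_coeff_cont[of J n])
    show "J t \<in> carrier_mat n n" for t by (rule Jc)
    fix i j assume "i < n" "j < n"
    then show "isCont (\<lambda>t. J t $$ (i, j)) 0" by (simp add: Jent)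
  qed
  have dsd: "det M = 0" "n_neg_eigs M = n - 1" using A1_sing A1_neg D unfolding M_def by auto
  have c10: "c 1 0 > 0" unfolding c_def J0 using p0_facts(2)[OF Mc n1 dsd] .
  have polyeq: "(\<Sum>i\<le>n. complex_of_real (c i \<kappa>) * z^i) = poly (map_poly complex_of_real (char_poly (J \<kappa>))) z" for \<kappa> z
    unfolding c_def using degree_monic_char_poly[OF Jc[of \<kappa>]] by (intro poly_of_real_sum[symmetric]) simp
  have roots0: "z = 0" if "(\<Sum>i\<le>n. complex_of_real (c i 0) * z^i) = 0" "Re z \<ge> 0" for z
    using p0_facts(1)[OF Mc n1 dsd, of z] that unfolding polyeq J0 by simp
  obtain kh where kh: "kh > 0" "\<forall>\<kappa>\<in>{0<..<kh}. Psi_minus m lo hi B C J2 J4 \<kappa> > 0"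
    using Psi_minus_ip unfolding initially_positive_def by blast
  have c0pos: "c 0 \<kappa> > 0" if "0 < \<kappa>" "\<kappa> < kh" for \<kappa>
  proof -
    have "c 0 \<kappa> = det (- J \<kappa>)" unfolding c_def using poly_char_poly_0[OF Jc] by (simp add: poly_0_coeff_0)
    also have "\<dots> \<ge> Psi_minus m lo hi B C J2 J4 \<kappa>" unfolding Psi_minus_def J_def
      by (rule cInf_lower) (use D Psi_bdd(1)[OF B(1) C(1) J2(1) J4(1) bounds] in auto)
    finally have "Psi_minus m lo hi B C J2 J4 \<kappa> \<le> c 0 \<kappa>" .
    moreover have "Psi_minus m lo hi B C J2 J4 \<kappa> > 0" using kh(2) that by simp
    ultimately show ?thesis by linarith
  qed
  define R where "R = (\<Sum>i<n. \<Sum>j<n. \<bar>M $$ (i,j)\<bar> + \<bar>J2 $$ (i,j)\<bar> + \<bar>J4 $$ (i,j)\<bar>)"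
  have bnd: "cmod z \<le> R" if k: "0 < \<kappa>" "\<kappa> \<le> 1" and z: "(\<Sum>i\<le>n. complex_of_real (c i \<kappa>) * z^i) = 0" for \<kappa> z
  proof -
    have "eigenvalue (cmat (J \<kappa>)) z" using z unfolding polyeq eig_iff[OF Jc] .
    then have "cmod z \<le> (\<Sum>i<n. \<Sum>j<n. \<bar>J \<kappa> $$ (i,j)\<bar>)" by (rule eig_bound[OF Jc])
    also have "\<dots> \<le> R" unfolding R_def
    proof (intro sum_mono)
      fix i j assume "i \<in> {..<n}" "j \<in> {..<n}"
      then have e: "J \<kappa> $$ (i,j) = M $$ (i,j) + \<kappa>^2 * J2 $$ (i,j) + \<kappa>^4 * J4 $$ (i,j)" by (simp add: Jent)
      have k2: "\<kappa>^2 \<le> 1" "\<kappa>^4 \<le> 1" using k by (auto intro: power_le_one)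
      have "\<bar>\<kappa>^2 * J2 $$ (i,j)\<bar> \<le> \<bar>J2 $$ (i,j)\<bar>"
        unfolding abs_mult using k2 by (intro mult_left_le_one_le) auto
      moreover have "\<bar>\<kappa>^4 * J4 $$ (i,j)\<bar> \<le> \<bar>J4 $$ (i,j)\<bar>"
        unfolding abs_mult using k2 k by (intro mult_left_le_one_le) (auto simp: power_even_abs_numeral)
      ultimately show "\<bar>J \<kappa> $$ (i,j)\<bar> \<le> \<bar>M $$ (i,j)\<bar> + \<bar>J2 $$ (i,j)\<bar> + \<bar>J4 $$ (i,j)\<bar>"
        unfolding e by linarith
    qed
    finally show ?thesis .
  qed
  have ex: "\<exists>k>0. \<forall>\<kappa>. 0 < \<kappa> \<and> \<kappa> < k \<longrightarrow> (\<forall>z. (\<Sum>i\<le>n. complex_of_real (c i \<kappa>) * z^i) = 0 \<longrightarrow> Re z < 0)"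
    by (rule small_abstract[where c=c and N=n and kh=kh and R=R, OF n1 cont c10 roots0 kh(1) c0pos bnd])
  then obtain k where k: "k > 0" "\<forall>\<kappa>. 0 < \<kappa> \<and> \<kappa> < k \<longrightarrow> (\<forall>z. (\<Sum>i\<le>n. complex_of_real (c i \<kappa>) * z^i) = 0 \<longrightarrow> Re z < 0)"
    by (elim exE conjE) (rule that)
  have small: "spectral_abscissa (J \<kappa>) < 0" if "0 < \<kappa>" "\<kappa> < k" for \<kappa>
  proof (rule SA_neg[OF Jc n1])
    fix z assume "eigenvalue (cmat (J \<kappa>)) z"
    then have "(\<Sum>i\<le>n. complex_of_real (c i \<kappa>) * z^i) = 0" unfolding polyeq eig_iff[OF Jc] .
    then show "Re z < 0" using k(2) that by blast
  qed
  obtain k1 k2 where kk: "0 \<le> k1" "k1 < k2" "Psi_plus m lo hi B C J2 J4 k2 < 0"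
    using Psi_plus_nsc unfolding negative_sign_change_def by blast
  have pos: "spectral_abscissa (J k2) > 0"
  proof -
    have "det (- J k2) \<le> Psi_plus m lo hi B C J2 J4 k2" unfolding Psi_plus_def J_def
      by (rule cSup_upper) (use D Psi_bdd(2)[OF B(1) C(1) J2(1) J4(1) bounds] in auto)
    then have "det (- J k2) < 0" using kk by linarith
    from pos_eig[OF Jc this] obtain z where "eigenvalue (cmat (J k2)) z" "Re z > 0" by blast
    then show ?thesis by (rule SA_pos[OF Jc])
  qed
  obtain kb where kb: "neg_def n ((kb^2) \<cdot>\<^sub>m J2 + (kb^4) \<cdot>\<^sub>m J4)" using A2_kbar by blast
  have ex3: "\<exists>\<kappa>>k2. \<forall>x\<in>carrier_vec n. x \<noteq> 0\<^sub>v n \<longrightarrow> qform (M + (\<kappa>^2) \<cdot>\<^sub>m J2 + (\<kappa>^4) \<cdot>\<^sub>m J4) x < 0"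
    by (rule large_kappa[OF Mc J2(1) J4(1) n1 A2_J4 kb])
  then obtain k3 where k3: "k3 > k2" "\<forall>x\<in>carrier_vec n. x \<noteq> 0\<^sub>v n \<longrightarrow> qform (M + (k3^2) \<cdot>\<^sub>m J2 + (k3^4) \<cdot>\<^sub>m J4) x < 0"
    by (elim exE conjE) (rule that)
  have nd3: "qform (J k3) x < 0" if "x \<in> carrier_vec n" "x \<noteq> 0\<^sub>v n" for x
    using k3(2) that unfolding JM by blast
  have large: "spectral_abscissa (J k3) < 0"
  proof (rule SA_neg[OF Jc n1])
    fix z assume ev: "eigenvalue (cmat (J k3)) z"
    show "Re z < 0" by (rule negdef_eig[of "J k3" n z, OF Jc nd3 ev])
  qed
  show "microphase_separation (\<lambda>\<kappa>. spectral_abscissa (Jmat B C J2 J4 D \<kappa>))"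
    unfolding microphase_separation_def
  proof (rule exI[of _ "min k (k2/2)"], intro conjI)
    show "0 < min k (k2/2)" using k(1) kk by simp
    show "\<forall>\<kappa>\<in>{0<..<min k (k2/2)}. spectral_abscissa (Jmat B C J2 J4 D \<kappa>) < 0"
      using small unfolding J_def by auto
    have "min k (k2/2) < k2" using kk by simp
    moreover have "0 < spectral_abscissa (Jmat B C J2 J4 D k2)" using pos unfolding J_def .
    moreover have "spectral_abscissa (Jmat B C J2 J4 D k3) < 0" using large unfolding J_def .
    ultimately show "\<exists>a b. min k (k2/2) < a \<and> a < b \<and> 0 < spectral_abscissa (Jmat B C J2 J4 D a) \<and> spectral_abscissa (Jmat B C J2 J4 D b) < 0"
      using k3(1) by blast
  qed
qed

end
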